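(* Let $k,\ell$ be positive integers. A matroid $M$ is $(k,\ell)$-uniform if and only if every rank-$(r(M)-k)$ flat of $M$ has nullity less than $\ell$.
   Context: A matroid is $(k,\ell)$-uniform if it has no minor isomorphic to $U_{k,k}\oplus U_{0,\ell}$. The nullity of a set $X$ in $M$ is $|X|-r_M(X)$. *)

theory Defs
  imports Main
begin

definition matroid :: "'a set \<Rightarrow> ('a set \<Rightarrow> bool) \<Rightarrow> bool" where
  "matroid E indep \<longleftrightarrow>
     finite E \<and> indep {} \<and>
     (\<forall>I. indep I \<longrightarrow> I \<subseteq> E) \<and>
     (\<forall>I J. indep I \<and> J \<subseteq> I \<longrightarrow> indep J) \<and>
     (\<forall>I J. indep I \<and> indep J \<and> card I < card J \<longrightarrow>
        (\<exists>x \<in> J - I. indep (insert x I)))"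

definition rank_of :: "('a set \<Rightarrow> bool) \<Rightarrow> 'a set \<Rightarrow> nat" where
  "rank_of indep A = Max (card ` {I. I \<subseteq> A \<and> indep I})"

definition nullity :: "('a set \<Rightarrow> bool) \<Rightarrow> 'a set \<Rightarrow> nat" where
  "nullity indep X = card X - rank_of indep X"

definition flat :: "'a set \<Rightarrow> ('a set \<Rightarrow> bool) \<Rightarrow> 'a set \<Rightarrow> bool" where
  "flat E indep F \<longleftrightarrow> F \<subseteq> E \<and>
     (\<forall>x \<in> E - F. rank_of indep (insert x F) > rank_of indep F)"

text \<open>Independent sets of the minor M / C \ D (ground set X = E - (C \<union> D)):
  I is independent iff I \<subseteq> X and r(I \<union> C) = |I| + r(C).\<close>
definition minor_indep :: "('a set \<Rightarrow> bool) \<Rightarrow> 'a set \<Rightarrow> 'a set \<Rightarrow> 'a set \<Rightarrow> bool" where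
  "minor_indep indep C X I \<longleftrightarrow> I \<subseteq> X \<and> rank_of indep (I \<union> C) = card I + rank_of indep C"

definition is_minor :: "'a set \<Rightarrow> ('a set \<Rightarrow> bool) \<Rightarrow> 'a set \<Rightarrow> ('a set \<Rightarrow> bool) \<Rightarrow> bool" where
  "is_minor E' indep' E indep \<longleftrightarrow>
     (\<exists>C D. C \<subseteq> E \<and> D \<subseteq> E \<and> C \<inter> D = {} \<and> E' = E - (C \<union> D) \<and>
            indep' = minor_indep indep C E')"

definition matroid_iso :: "'a set \<Rightarrow> ('a set \<Rightarrow> bool) \<Rightarrow> 'b set \<Rightarrow> ('b set \<Rightarrow> bool) \<Rightarrow> bool" where
  "matroid_iso E1 indep1 E2 indep2 \<longleftrightarrow>
     (\<exists>f. bij_betw f E1 E2 \<and> (\<forall>I \<subseteq> E1. indep1 I \<longleftrightarrow> indep2 (f ` I)))"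

text \<open>U_{k,k} \<oplus> U_{0,l} on ground set {0..<k+l}: elements 0..k-1 are coloops,
  elements k..k+l-1 are loops.\<close>
definition Ukk_sum_U0l_ground :: "nat \<Rightarrow> nat \<Rightarrow> nat set" where
  "Ukk_sum_U0l_ground k l = {0..<k+l}"

definition Ukk_sum_U0l_indep :: "nat \<Rightarrow> nat \<Rightarrow> nat set \<Rightarrow> bool" where
  "Ukk_sum_U0l_indep k l I \<longleftrightarrow> I \<subseteq> {0..<k}"

definition kl_uniform :: "nat \<Rightarrow> nat \<Rightarrow> 'a set \<Rightarrow> ('a set \<Rightarrow> bool) \<Rightarrow> bool" where
  "kl_uniform k l E indep \<longleftrightarrow>
     \<not> (\<exists>E' indep'. is_minor E' indep' E indep \<and>
          matroid_iso E' indep' (Ukk_sum_U0l_ground k l) (Ukk_sum_U0l_indep k l))"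

end

theory Submission
  imports Defs
begin

lemma mat_finite: "matroid E indep \<Longrightarrow> finite E" by (simp add: matroid_def)
lemma mat_empty: "matroid E indep \<Longrightarrow> indep {}" by (simp add: matroid_def)
lemma mat_sub: "matroid E indep \<Longrightarrow> indep I \<Longrightarrow> I \<subseteq> E" by (simp add: matroid_def)
lemma mat_her: "matroid E indep \<Longrightarrow> indep I \<Longrightarrow> J \<subseteq> I \<Longrightarrow> indep J"
  unfolding matroid_def by blast
lemma mat_aug: "matroid E indep \<Longrightarrow> indep I \<Longrightarrow> indep J \<Longrightarrow> card I < card J \<Longrightarrow>
   \<exists>x \<in> J - I. indep (insert x I)"
  unfolding matroid_def by blast
lemma mat_fin_indep: "matroid E indep \<Longrightarrow> indep I \<Longrightarrow> finite I"
  using mat_finite mat_sub finite_subset by metis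

lemma rank_set_fin:
  assumes M: "matroid E indep"
  shows "finite (card ` {I. I \<subseteq> A \<and> indep I})"
proof -
  have "{I. I \<subseteq> A \<and> indep I} \<subseteq> Pow E" using mat_sub[OF M] by auto
  then have "finite {I. I \<subseteq> A \<and> indep I}" using mat_finite[OF M] finite_subset by blast
  then show ?thesis by simp
qed

lemma rank_ex:
  assumes M: "matroid E indep"
  shows "\<exists>I. I \<subseteq> A \<and> indep I \<and> card I = rank_of indep A"
proof -
  have ne: "card ` {I. I \<subseteq> A \<and> indep I} \<noteq> {}" using mat_empty[OF M] by auto
  have "rank_of indep A \<in> card ` {I. I \<subseteq> A \<and> indep I}"
    unfolding rank_of_def using Max_in[OF rank_set_fin[OF M] ne] .
  then show ?thesis by auto
qed

lemma rank_ge: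
  assumes M: "matroid E indep" and "I \<subseteq> A" "indep I"
  shows "card I \<le> rank_of indep A"
  unfolding rank_of_def using Max_ge[OF rank_set_fin[OF M]] assms by blast

lemma rank_indep:
  assumes M: "matroid E indep" and "indep I"
  shows "rank_of indep I = card I"
proof -
  obtain J where J: "J \<subseteq> I" "indep J" "card J = rank_of indep I" using rank_ex[OF M] by blast
  have "card J \<le> card I" using J(1) mat_fin_indep[OF M assms(2)] card_mono by blast
  moreover have "card I \<le> rank_of indep I" using rank_ge[OF M _ assms(2)] by blast
  ultimately show ?thesis using J by simp
qed

lemma rank_insert_le:
  assumes M: "matroid E indep"
  shows "rank_of indep (insert x A) \<le> rank_of indep A + 1"
proof -
  obtain J where J: "J \<subseteq> insert x A" "indep J" "card J = rank_of indep (insert x A)"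
    using rank_ex[OF M] by blast
  have fJ: "finite J" using mat_fin_indep[OF M J(2)] .
  have "J - {x} \<subseteq> A" using J(1) by auto
  moreover have "indep (J - {x})" using mat_her[OF M J(2)] by blast
  ultimately have "card (J - {x}) \<le> rank_of indep A" using rank_ge[OF M] by blast
  moreover have "card J \<le> card (J - {x}) + 1"
    using fJ by (metis card_Diff1_le card_Diff_singleton_if le_add1 add.commute
        One_nat_def Suc_pred' card_gt_0_iff  empty_iff  le_refl plus_1_eq_Suc)
  ultimately show ?thesis using J(3) by linarith
qed

lemma max_indep:
  assumes M: "matroid E indep" and I: "indep I" "I \<subseteq> A"
    and mx: "\<forall>x\<in>A - I. \<not> indep (insert x I)"
  shows "rank_of indep A = card I"
proof -
  obtain J where J: "J \<subseteq> A" "indep J" "card J = rank_of indep A" using rank_ex[OF M] by blast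
  have "\<not> card I < card J"
  proof
    assume "card I < card J"
    then obtain x where "x \<in> J - I" "indep (insert x I)" using mat_aug[OF M I(1) J(2)] by blast
    then show False using mx J(1) by blast
  qed
  moreover have "card I \<le> rank_of indep A" using rank_ge[OF M I(2) I(1)] .
  ultimately show ?thesis using J(3) by linarith
qed

lemma extend_basis:
  assumes M: "matroid E indep"
  shows "indep I \<Longrightarrow> \<exists>B. indep B \<and> I \<subseteq> B \<and> card B = rank_of indep E"
proof (induction "rank_of indep E - card I" arbitrary: I rule: less_induct)
  case less
  have le: "card I \<le> rank_of indep E" using rank_ge[OF M mat_sub[OF M less.prems] less.prems] .
  show ?case
  proof (cases "card I = rank_of indep E")
    case True then show ?thesis using less.prems by blast
  next
    case False
    then have lt: "card I < rank_of indep E" using le by simp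
    obtain B0 where B0: "B0 \<subseteq> E" "indep B0" "card B0 = rank_of indep E" using rank_ex[OF M] by blast
    obtain x where x: "x \<in> B0 - I" "indep (insert x I)" using mat_aug[OF M less.prems B0(2)] lt B0(3) by auto
    have "card (insert x I) = card I + 1" using x(1) mat_fin_indep[OF M less.prems] by simp
    then have "rank_of indep E - card (insert x I) < rank_of indep E - card I" using lt by simp
    from less.hyps[OF this x(2)] show ?thesis by blast
  qed
qed


lemma dir1:
  assumes M: "matroid E indep" and F: "flat E indep F" and rk: "rank_of indep F + k = rank_of indep E"
    and nl: "l \<le> nullity indep F"
  shows "\<not> kl_uniform k l E indep"
proof -
  have FE: "F \<subseteq> E" using F by (simp add: flat_def)
  have fE: "finite E" using mat_finite[OF M] .
  have fF: "finite F" using FE fE finite_subset by blast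
  obtain BF where BF: "BF \<subseteq> F" "indep BF" "card BF = rank_of indep F" using rank_ex[OF M] by blast
  obtain B where B: "indep B" "BF \<subseteq> B" "card B = rank_of indep E" using extend_basis[OF M BF(2)] by blast
  have fB: "finite B" using mat_fin_indep[OF M B(1)] .
  have BE: "B \<subseteq> E" using mat_sub[OF M B(1)] .
  define K where "K = B - BF"
  have cK: "card K = k" unfolding K_def using card_Diff_subset[OF finite_subset[OF B(2) fB] B(2)] B(3) BF(3) rk by simp
  have KF: "K \<inter> F = {}"
  proof (rule ccontr)
    assume "K \<inter> F \<noteq> {}"
    then obtain y where y: "y \<in> K" "y \<in> F" by blast
    have "insert y BF \<subseteq> F" using y BF(1) by auto
    moreover have "indep (insert y BF)" using mat_her[OF M B(1)] y B(2) unfolding K_def by auto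
    ultimately have "card (insert y BF) \<le> rank_of indep F" using rank_ge[OF M] by blast
    moreover have "card (insert y BF) = card BF + 1" using y mat_fin_indep[OF M BF(2)] unfolding K_def by simp
    ultimately show False using BF(3) by simp
  qed
  have "card (F - BF) = nullity indep F" unfolding nullity_def using card_Diff_subset[OF finite_subset[OF BF(1) fF] BF(1)] BF(3) by simp
  then have "l \<le> card (F - BF)" using nl by simp
  then obtain L where L: "L \<subseteq> F - BF" "card L = l" using obtain_subset_with_card_n by metis
  have fK: "finite K" "finite L" using fB K_def L(1) fF finite_subset by auto
  have KL: "K \<inter> L = {}" using KF L(1) by auto
  define E' where "E' = K \<union> L"
  define D where "D = E - (BF \<union> K \<union> L)"
  have E'eq: "E' = E - (BF \<union> D)" unfolding E'_def D_def K_def using L(1) FE BE by auto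
  have minor: "is_minor E' (minor_indep indep BF E') E indep"
    unfolding is_minor_def
    apply (rule exI[of _ BF], rule exI[of _ D])
    using BF(1) FE E'eq unfolding D_def by auto
  have "\<exists>g. bij_betw g K {0..<k}" using bij_betw_iff_card[OF fK(1), of "{0..<k}"] cK by simp
  then obtain g where g: "bij_betw g K {0..<k}" by blast
  have "\<exists>h. bij_betw h L {k..<k+l}" using bij_betw_iff_card[OF fK(2), of "{k..<k+l}"] L(2) by simp
  then obtain h where h: "bij_betw h L {k..<k+l}" by blast
  define f where "f x = (if x \<in> K then g x else h x)" for x
  have g': "bij_betw f K {0..<k}" using g by (rule bij_betw_cong[THEN iffD1, rotated]) (simp add: f_def)
  have h': "bij_betw f L {k..<k+l}" using h by (rule bij_betw_cong[THEN iffD1, rotated]) (use KL in \<open>auto simp: f_def\<close>)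
  have fb: "bij_betw f E' {0..<k+l}"
  proof -
    have "bij_betw f (K \<union> L) ({0..<k} \<union> {k..<k+l})" using bij_betw_combine[OF g' h'] by auto
    moreover have "{0..<k} \<union> {k..<k+l} = {0..<k+l}" by auto
    ultimately show ?thesis unfolding E'_def by simp
  qed
  have rBF: "rank_of indep BF = card BF" using rank_indep[OF M BF(2)] .
  have iso: "\<forall>I \<subseteq> E'. minor_indep indep BF E' I \<longleftrightarrow> Ukk_sum_U0l_indep k l (f ` I)"
  proof (intro allI impI)
    fix I assume IE: "I \<subseteq> E'"
    have fI: "finite I" using IE fK unfolding E'_def using finite_subset by blast
    have img: "f ` I \<subseteq> {0..<k} \<longleftrightarrow> I \<subseteq> K"
    proof
      assume a: "f ` I \<subseteq> {0..<k}"
      show "I \<subseteq> K"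
      proof
        fix x assume x: "x \<in> I"
        show "x \<in> K"
        proof (rule ccontr)
          assume "x \<notin> K"
          then have "x \<in> L" using x IE E'_def by auto
          then have "f x \<in> {k..<k+l}" using h' bij_betwE by blast
          then show False using a x by auto
        qed
      qed
    next
      assume "I \<subseteq> K" then show "f ` I \<subseteq> {0..<k}" using g' bij_betwE by blast
    qed
    show "minor_indep indep BF E' I \<longleftrightarrow> Ukk_sum_U0l_indep k l (f ` I)"
      unfolding Ukk_sum_U0l_indep_def img minor_indep_def rBF
    proof
      assume "I \<subseteq> E' \<and> rank_of indep (I \<union> BF) = card I + card BF"
      then have eq: "rank_of indep (I \<union> BF) = card I + card BF" by simp
      show "I \<subseteq> K"
      proof (rule ccontr)
        assume "\<not> I \<subseteq> K"
        then obtain x where x: "x \<in> I" "x \<notin> K" by blast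
        obtain J where J: "J \<subseteq> I \<union> BF" "indep J" "card J = rank_of indep (I \<union> BF)" using rank_ex[OF M] by blast
        have "J \<subseteq> (J \<inter> F) \<union> (I \<inter> K)" using J(1) IE BF(1) L(1) unfolding E'_def by auto
        moreover have "finite ((J \<inter> F) \<union> (I \<inter> K))" using fI fF by simp
        ultimately have "card J \<le> card ((J \<inter> F) \<union> (I \<inter> K))" by (rule card_mono[rotated])
        also have "\<dots> \<le> card (J \<inter> F) + card (I \<inter> K)" by (rule card_Un_le)
        finally have "card J \<le> card (J \<inter> F) + card (I \<inter> K)" .
        moreover have "card (J \<inter> F) \<le> card BF" using rank_ge[OF M _ mat_her[OF M J(2)]] BF(3) by auto
        moreover have "card (I \<inter> K) < card I"
        proof (rule psubset_card_mono[OF fI])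
          show "I \<inter> K \<subset> I" using x by blast
        qed
        ultimately show False using J(3) eq by linarith
      qed
    next
      assume IK: "I \<subseteq> K"
      have "I \<union> BF \<subseteq> B" using IK B(2) K_def by auto
      then have "indep (I \<union> BF)" using mat_her[OF M B(1)] by blast
      then have "rank_of indep (I \<union> BF) = card (I \<union> BF)" using rank_indep[OF M] by blast
      also have "\<dots> = card I + card BF"
        using IK fI mat_fin_indep[OF M BF(2)] unfolding K_def by (subst card_Un_disjoint) auto
      finally show "I \<subseteq> E' \<and> rank_of indep (I \<union> BF) = card I + card BF" using IE by simp
    qed
  qed
  have "matroid_iso E' (minor_indep indep BF E') (Ukk_sum_U0l_ground k l) (Ukk_sum_U0l_indep k l)"
    unfolding matroid_iso_def Ukk_sum_U0l_ground_def using fb iso by blast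
  then show ?thesis unfolding kl_uniform_def using minor by blast
qed


lemma dir2:
  assumes M: "matroid E indep" and nu: "\<not> kl_uniform k l E indep"
  shows "\<exists>F. flat E indep F \<and> rank_of indep F + k = rank_of indep E \<and> l \<le> nullity indep F"
proof -
  have fE: "finite E" using mat_finite[OF M] .
  obtain E' indep' C D f where CD: "C \<subseteq> E" "D \<subseteq> E" "C \<inter> D = {}" "E' = E - (C \<union> D)"
      and ind': "indep' = minor_indep indep C E'"
      and fb: "bij_betw f E' {0..<k+l}" and fi: "\<forall>I \<subseteq> E'. indep' I \<longleftrightarrow> f ` I \<subseteq> {0..<k}"
  proof -
    from nu obtain E' indep' where m: "is_minor E' indep' E indep"
      and i: "matroid_iso E' indep' (Ukk_sum_U0l_ground k l) (Ukk_sum_U0l_indep k l)"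
      unfolding kl_uniform_def by blast
    from m obtain C D where "C \<subseteq> E" "D \<subseteq> E" "C \<inter> D = {}" "E' = E - (C \<union> D)"
      "indep' = minor_indep indep C E'" unfolding is_minor_def by blast
    moreover from i obtain f where "bij_betw f E' {0..<k+l}" "\<forall>I \<subseteq> E'. indep' I \<longleftrightarrow> f ` I \<subseteq> {0..<k}"
      unfolding matroid_iso_def Ukk_sum_U0l_ground_def Ukk_sum_U0l_indep_def by blast
    ultimately show ?thesis by (rule that[of C D E' indep' f])
  qed
  define K where "K = {x \<in> E'. f x < k}"
  define L where "L = {x \<in> E'. k \<le> f x}"
  have inj: "inj_on f E'" using fb bij_betw_def by blast
  have fE': "finite E'" using CD(4) fE by simp
  have fKi: "f ` K = {0..<k}"
  proof
    show "f ` K \<subseteq> {0..<k}" unfolding K_def by auto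
    show "{0..<k} \<subseteq> f ` K"
    proof
      fix n assume n: "n \<in> {0..<k}"
      then have "n \<in> f ` E'" using fb bij_betw_imp_surj_on by fastforce
      then obtain x where "x \<in> E'" "n = f x" by blast
      then show "n \<in> f ` K" using n unfolding K_def by auto
    qed
  qed
  have fLi: "f ` L = {k..<k+l}"
  proof
    show "f ` L \<subseteq> {k..<k+l}" unfolding L_def using fb bij_betwE by fastforce
    show "{k..<k+l} \<subseteq> f ` L"
    proof
      fix n assume n: "n \<in> {k..<k+l}"
      then have "n \<in> f ` E'" using fb bij_betw_imp_surj_on by fastforce
      then obtain x where "x \<in> E'" "n = f x" by blast
      then show "n \<in> f ` L" using n unfolding L_def by auto
    qed
  qed
  have cK: "card K = k"
  proof -
    have "inj_on f K" using inj unfolding K_def by (rule inj_on_subset) auto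
    then have "card (f ` K) = card K" by (rule card_image)
    then show ?thesis using fKi by simp
  qed
  have cL: "card L = l"
  proof -
    have "inj_on f L" using inj unfolding L_def by (rule inj_on_subset) auto
    then have "card (f ` L) = card L" by (rule card_image)
    then show ?thesis using fLi by simp
  qed
  have KE': "K \<subseteq> E'" "L \<subseteq> E'" unfolding K_def L_def by auto
  have fK: "finite K" "finite L" using KE' fE' finite_subset by auto
  have KC: "K \<inter> C = {}" "L \<inter> C = {}" using KE' CD(4) by auto
  have KL: "K \<inter> L = {}" unfolding K_def L_def by auto
  have KEE: "K \<subseteq> E" "L \<subseteq> E" using KE' CD(4) by auto
  have "minor_indep indep C E' K" using fi KE' fKi ind' by auto
  then have rKC: "rank_of indep (K \<union> C) = k + rank_of indep C" unfolding minor_indep_def using cK by simp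
  have loop: "rank_of indep (insert x C) \<noteq> 1 + rank_of indep C" if x: "x \<in> L" for x
  proof -
    have "{x} \<subseteq> E'" using x KE' by auto
    moreover have "\<not> f ` {x} \<subseteq> {0..<k}" using x unfolding L_def by auto
    ultimately have "\<not> minor_indep indep C E' {x}" using fi ind' by blast
    then show ?thesis unfolding minor_indep_def using \<open>{x} \<subseteq> E'\<close> by simp
  qed
  obtain J where J: "J \<subseteq> K \<union> C" "indep J" "card J = rank_of indep (K \<union> C)" using rank_ex[OF M] by blast
  have fJ: "finite J" using mat_fin_indep[OF M J(2)] .
  have c1: "card (J \<inter> C) \<le> rank_of indep C" using rank_ge[OF M _ mat_her[OF M J(2)]] by auto
  have c2: "card (J \<inter> K) \<le> k" using cK card_mono[OF fK(1), of "J \<inter> K"] by simp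
  have "J = (J \<inter> K) \<union> (J \<inter> C)" using J(1) by auto
  then have "card J \<le> card (J \<inter> K) + card (J \<inter> C)" using card_Un_le[of "J \<inter> K" "J \<inter> C"] by simp
  then have e1: "card (J \<inter> K) = k" and e2: "card (J \<inter> C) = rank_of indep C" using c1 c2 J(3) rKC by linarith+
  have JK: "K \<subseteq> J"
  proof -
    have "J \<inter> K = K" using card_subset_eq[OF fK(1), of "J \<inter> K"] e1 cK by simp
    then show ?thesis by blast
  qed
  define BC where "BC = J \<inter> C"
  have BCi: "indep BC" unfolding BC_def using mat_her[OF M J(2)] by blast
  have fBC: "finite BC" using mat_fin_indep[OF M BCi] .
  have dep: "\<not> indep (insert y BC)" if y: "y \<in> (C \<union> L) - BC" for y
  proof
    assume a: "indep (insert y BC)"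
    have cy: "card (insert y BC) = rank_of indep C + 1" using y fBC e2 BC_def by simp
    show False
    proof (cases "y \<in> C")
      case True
      then have "insert y BC \<subseteq> C" unfolding BC_def by auto
      then have "card (insert y BC) \<le> rank_of indep C" using rank_ge[OF M _ a] by blast
      then show False using cy by simp
    next
      case False
      then have yL: "y \<in> L" using y by auto
      have "insert y BC \<subseteq> insert y C" unfolding BC_def by auto
      then have "rank_of indep C + 1 \<le> rank_of indep (insert y C)" using rank_ge[OF M _ a] cy by simp
      moreover have "rank_of indep (insert y C) \<le> rank_of indep C + 1" using rank_insert_le[OF M] .
      ultimately show False using loop[OF yL] by simp
    qed
  qed
  obtain B where B: "indep B" "J \<subseteq> B" "card B = rank_of indep E" using extend_basis[OF M J(2)] by blast
  have fB: "finite B" using mat_fin_indep[OF M B(1)] .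
  have BE: "B \<subseteq> E" using mat_sub[OF M B(1)] .
  define F0 where "F0 = B - K"
  have F0i: "indep F0" unfolding F0_def using mat_her[OF M B(1)] by blast
  have fF0: "finite F0" using mat_fin_indep[OF M F0i] .
  have BCF0: "BC \<subseteq> F0" unfolding F0_def BC_def using B(2) KC by auto
  have cF0: "card F0 + k = rank_of indep E"
  proof -
    have KB: "K \<subseteq> B" using JK B(2) by auto
    have "card (B - K) = card B - card K" using card_Diff_subset[OF fK(1) KB] .
    moreover have "card K \<le> card B" using card_mono[OF fB KB] .
    ultimately show ?thesis unfolding F0_def using B(3) cK by simp
  qed
  have LF0: "L \<inter> F0 = {}"
  proof (rule ccontr)
    assume "L \<inter> F0 \<noteq> {}"
    then obtain y where y: "y \<in> L" "y \<in> F0" by blast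
    have "y \<notin> BC" using y KC unfolding BC_def by auto
    then have "\<not> indep (insert y BC)" using dep y by blast
    moreover have "insert y BC \<subseteq> F0" using y BCF0 by auto
    ultimately show False using mat_her[OF M F0i] by blast
  qed
  define F where "F = {y \<in> E. y \<in> F0 \<or> \<not> indep (insert y F0)}"
  have FE: "F \<subseteq> E" unfolding F_def by auto
  have fF: "finite F" using FE fE finite_subset by blast
  have F0F: "F0 \<subseteq> F" unfolding F_def using F0_def BE by auto
  have CLF: "C \<union> L \<subseteq> F"
  proof
    fix y assume y: "y \<in> C \<union> L"
    have yE: "y \<in> E" using y CD(1) KEE by auto
    show "y \<in> F"
    proof (cases "y \<in> BC")
      case True then show ?thesis using BCF0 F0F by auto
    next
      case False
      then have "\<not> indep (insert y BC)" using dep y by blast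
      then have "\<not> indep (insert y F0)" proof -
        have "insert y BC \<subseteq> insert y F0" using BCF0 by auto
        then show ?thesis using mat_her[OF M] \<open>\<not> indep (insert y BC)\<close> by blast
      qed
      then show ?thesis unfolding F_def using yE by auto
    qed
  qed
  have rF: "rank_of indep F = card F0"
    by (rule max_indep[OF M F0i F0F]) (auto simp: F_def)
  have flat: "flat E indep F"
    unfolding flat_def
  proof (intro conjI ballI FE)
    fix x assume x: "x \<in> E - F"
    then have xi: "indep (insert x F0)" "x \<notin> F0" unfolding F_def by auto
    have "insert x F0 \<subseteq> insert x F" using F0F by auto
    then have "card (insert x F0) \<le> rank_of indep (insert x F)" using rank_ge[OF M _ xi(1)] by blast
    then show "rank_of indep F < rank_of indep (insert x F)" using rF xi(2) fF0 by simp
  qed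
  have "F0 \<union> L \<subseteq> F" using F0F CLF by auto
  then have "card (F0 \<union> L) \<le> card F" using card_mono[OF fF] by blast
  moreover have "card (F0 \<union> L) = card F0 + l" using card_Un_disjoint[OF fF0 fK(2)] LF0 cL by auto
  ultimately have "l \<le> nullity indep F" unfolding nullity_def rF by simp
  then show ?thesis using flat rF cF0 by auto
qed

theorem proposition1p4:
  fixes E :: "'a set" and indep :: "'a set \<Rightarrow> bool" and k l :: nat
  assumes "matroid E indep" and "0 < k" and "0 < l"
  shows "kl_uniform k l E indep \<longleftrightarrow>
    (\<forall>F. flat E indep F \<and> rank_of indep F + k = rank_of indep E
         \<longrightarrow> nullity indep F < l)"
proof
  assume u: "kl_uniform k l E indep"
  show "\<forall>F. flat E indep F \<and> rank_of indep F + k = rank_of indep E \<longrightarrow> nullity indep F < l"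
  proof (intro allI impI)
    fix F assume "flat E indep F \<and> rank_of indep F + k = rank_of indep E"
    then show "nullity indep F < l" using dir1[OF assms(1), of F k l] u by linarith
  qed
next
  assume h: "\<forall>F. flat E indep F \<and> rank_of indep F + k = rank_of indep E \<longrightarrow> nullity indep F < l"
  show "kl_uniform k l E indep"
  proof (rule ccontr)
    assume "\<not> kl_uniform k l E indep"
    then obtain F where "flat E indep F" "rank_of indep F + k = rank_of indep E" "l \<le> nullity indep F"
      using dir2[OF assms(1)] by blast
    then show False using h by fastforce
  qed
qed

end
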